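(* Let $(G,L,v)$ be a reachable triple and $D$ a nonnegative integer. Then for every color $i\in[4]$ such that $i\in L(u)$ for some neighbor $u$ of $v$ in $G$: (1) if $\deg_G(v)=2$, then $P(G,L,v,i,D)\le\frac{12}{25}$; (2) if $\deg_G(v)=1$, then $P(G,L,v,i,D)\le\frac{6}{13}$.
   Context: Colors are $[4]=\{1,2,3,4\}$. A list-coloring instance $(G,L)$ is a finite simple graph $G=(V,E)$ with $L:V\to 2^{[4]}$. For a vertex $v$, $G_v$ is $G$ with $v$ and its incident edges removed, and $G_{v,w}=(G_v)_w$. If $v$ has neighbors $v_1,\dots,v_d$ (in a fixed order), then for $k\in[d]$ and a color $j$, $L_{k,j}$ is the list assignment on $G_v$ with $L_{k,j}(v_\ell)=L(v_\ell)\setminus\{j\}$ for $\ell<k$ and $L_{k,j}(u)=L(u)$ for all other vertices $u$ (so $L_{1,j}=L$). A triple $(G,L,v)$ with $v\in V$ is reachable if $\deg_G(u)\le3$ and $|L(u)|\ge\deg_G(u)+1$ for every $u\in V$, and moreover $\deg_G(v)\le2$ and $|L(v)|\ge\deg_G(v)+2$. The procedure $P(G,L,v,i,D)$ ($i\in[4]$, $D$ an integer) is defined recursively (empty products equal $1$): (a) If $i\notin L(v)$, return $0$. Otherwise, if $D\le 0$ or $\deg_G(v)=0$, return $1/|L(v)|$. (b) If $\deg_G(v)=1$ with neighbor $v_1$: let $x=P(G_v,L,v_1,i,D-1)$. If $|L(v)|=2$, say $L(v)=\{i,j\}$, let $y=P(G_v,L,v_1,j,D-1)$ and return $\frac{1-x}{2-x-y}$.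 If $|L(v)|=4$, return $\frac{1-x}{3}$. If $|L(v)|=3$, let $j$ be the unique color in $[4]\setminus L(v)$, $y=P(G_v,L,v_1,j,D-1)$, and return $\frac{1-x}{2+y}$. (c) If $\deg_G(v)=2$: order its neighbors $v_1,v_2$ so that $\deg_G(v_1)\ge\deg_G(v_2)$ and, if $\deg_G(v_1)=\deg_G(v_2)=1$, so that $i\notin L(v_1)$ implies $i\notin L(v_2)$. Let $u_1,\dots,u_{d_1}$ be the neighbors of $v_1$ in $G_v$ (fixed order) and for $k\in[d_1]$, $w\in[4]$ let $L'_{k,w}$ be the list assignment on $G_{v,v_1}$ with $L'_{k,w}(u_\ell)=L(u_\ell)\setminus\{w\}$ for $\ell<k$ and $L'_{k,w}(u)=L(u)$ otherwise. Set $x_{k,w}=P(G_{v,v_1},L'_{k,w},u_k,w,D-1)$ for $k\in[d_1]$, $w\in L(v_1)$. For $j\in L(v)$ set $f_j=0$ if $j\notin L(v_1)$ and otherwise $f_j=\frac{\prod_{k=1}^{d_1}(1-x_{k,j})}{\sum_{w\in L(v_1)}\prod_{k=1}^{d_1}(1-x_{k,w})}$, and set $y_j=P(G_v,L_{2,j},v_2,j,D-1)$. Return $\frac{(1-f_i)(1-y_i)}{\sum_{j\in L(v)}(1-f_j)(1-y_j)}$. (d) If $\deg_G(v)=3$ with neighbors $v_1,v_2,v_3$: for $j\in L(v)$ let $x_j=P(G_v,L_{1,j},v_1,j,D-1)$, $y_j=P(G_v,L_{2,j},v_2,j,D-1)$, $z_j=P(G_v,L_{3,j},v_3,j,D-1)$,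 and return $\frac{(1-x_i)(1-y_i)(1-z_i)}{\sum_{j\in L(v)}(1-x_j)(1-y_j)(1-z_j)}$. For reachable triples, all recursive calls are again on reachable triples and case (d) never occurs. *)

theory Defs
  imports Complex_Main
begin

text \<open>A graph is a pair (V, E) with E a set of two-element subsets of V.
  Colours are natural numbers; the colour set [4] is {1..4}.\<close>

type_synonym 'a graph = "'a set \<times> 'a set set"

definition simple_graph :: "'a graph \<Rightarrow> bool" where
  "simple_graph G \<longleftrightarrow> finite (fst G) \<and>
     (\<forall>e\<in>snd G. \<exists>u w. u \<noteq> w \<and> e = {u, w} \<and> u \<in> fst G \<and> w \<in> fst G)"

definition nbrs :: "'a graph \<Rightarrow> 'a \<Rightarrow> 'a set" where
  "nbrs G v = {u. {u, v} \<in> snd G}"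

definition deg :: "'a graph \<Rightarrow> 'a \<Rightarrow> nat" where
  "deg G v = card (nbrs G v)"

definition del :: "'a graph \<Rightarrow> 'a \<Rightarrow> 'a graph" where
  "del G v = (fst G - {v}, {e \<in> snd G. v \<notin> e})"

text \<open>A neighbour ordering: for every graph and vertex, a fixed (arbitrary) list
  enumerating the neighbours without repetition.\<close>
definition valid_nbo :: "('a graph \<Rightarrow> 'a \<Rightarrow> 'a list) \<Rightarrow> bool" where
  "valid_nbo nbo \<longleftrightarrow> (\<forall>G v. finite (nbrs G v) \<longrightarrow>
      distinct (nbo G v) \<and> set (nbo G v) = nbrs G v)"

definition list_instance :: "'a graph \<Rightarrow> ('a \<Rightarrow> nat set) \<Rightarrow> bool" where
  "list_instance G L \<longleftrightarrow> simple_graph G \<and> (\<forall>u\<in>fst G. L u \<subseteq> {1..4})"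

definition reachable :: "'a graph \<Rightarrow> ('a \<Rightarrow> nat set) \<Rightarrow> 'a \<Rightarrow> bool" where
  "reachable G L v \<longleftrightarrow> list_instance G L \<and> v \<in> fst G \<and>
     (\<forall>u\<in>fst G. deg G u \<le> 3 \<and> card (L u) \<ge> deg G u + 1) \<and>
     deg G v \<le> 2 \<and> card (L v) \<ge> deg G v + 2"

text \<open>L_{k,j} w.r.t. a neighbour list vs (0-indexed k): remove j from the lists of
  the first k vertices of vs.\<close>
definition Lmod :: "('a \<Rightarrow> nat set) \<Rightarrow> 'a list \<Rightarrow> nat \<Rightarrow> nat \<Rightarrow> 'a \<Rightarrow> nat set" where
  "Lmod L vs k j = (\<lambda>u. if u \<in> set (take k vs) then L u - {j} else L u)"

text \<open>Ordering of the two neighbours in case (c): (a,b) is admissible as (v1,v2).\<close>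
definition good_pair :: "'a graph \<Rightarrow> ('a \<Rightarrow> nat set) \<Rightarrow> nat \<Rightarrow> 'a \<Rightarrow> 'a \<Rightarrow> bool" where
  "good_pair G L i a b \<longleftrightarrow> deg G a \<ge> deg G b \<and>
     (deg G a = 1 \<and> deg G b = 1 \<longrightarrow> (i \<notin> L a \<longrightarrow> i \<notin> L b))"

definition Pstep ::
  "('a graph \<Rightarrow> 'a \<Rightarrow> 'a list) \<Rightarrow>
   ('a graph \<Rightarrow> ('a \<Rightarrow> nat set) \<Rightarrow> 'a \<Rightarrow> nat \<Rightarrow> real) \<Rightarrow>
   'a graph \<Rightarrow> ('a \<Rightarrow> nat set) \<Rightarrow> 'a \<Rightarrow> nat \<Rightarrow> real" where
  "Pstep nbo R G L v i =
    (if i \<notin> L v then 0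
     else if deg G v = 0 then 1 / real (card (L v))
     else if deg G v = 1 then
       (let v1 = hd (nbo G v); Gv = del G v; x = R Gv L v1 i in
        if card (L v) = 2 then
          (let j = the_elem (L v - {i}); y = R Gv L v1 j in (1 - x) / (2 - x - y))
        else if card (L v) = 4 then (1 - x) / 3
        else if card (L v) = 3 then
          (let j = the_elem ({1..4} - L v); y = R Gv L v1 j in (1 - x) / (2 + y))
        else undefined)
     else if deg G v = 2 then
       (let a = nbo G v ! 0; b = nbo G v ! 1;
            v1 = (if good_pair G L i a b then a else b);
            v2 = (if good_pair G L i a b then b else a);
            Gv = del G v; Gvv = del Gv v1;
            us = nbo Gv v1; d1 = length us;
            x = (\<lambda>k w. R Gvv (Lmod L us k w) (us ! k) w);
            Q = (\<lambda>w. \<Prod>k<d1. (1 - x k w));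
            f = (\<lambda>j. if j \<notin> L v1 then 0 else Q j / (\<Sum>w\<in>L v1. Q w));
            y = (\<lambda>j. R Gv (Lmod L [v1, v2] 1 j) v2 j)
        in (1 - f i) * (1 - y i) / (\<Sum>j\<in>L v. (1 - f j) * (1 - y j)))
     else if deg G v = 3 then
       (let vs = nbo G v; Gv = del G v;
            x = (\<lambda>j. R Gv (Lmod L vs 0 j) (vs ! 0) j);
            y = (\<lambda>j. R Gv (Lmod L vs 1 j) (vs ! 1) j);
            z = (\<lambda>j. R Gv (Lmod L vs 2 j) (vs ! 2) j)
        in (1 - x i) * (1 - y i) * (1 - z i) /
           (\<Sum>j\<in>L v. (1 - x j) * (1 - y j) * (1 - z j)))
     else undefined)"

primrec Pproc ::
  "('a graph \<Rightarrow> 'a \<Rightarrow> 'a list) \<Rightarrow> 'a graph \<Rightarrow> ('a \<Rightarrow> nat set) \<Rightarrow> 'a \<Rightarrow> nat \<Rightarrow> nat \<Rightarrow> real" where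
  "Pproc nbo G L v i 0 = (if i \<notin> L v then 0 else 1 / real (card (L v)))"
| "Pproc nbo G L v i (Suc D) = Pstep nbo (\<lambda>G' L' v' i'. Pproc nbo G' L' v' i' D) G L v i"

end

theory Submission
  imports Defs
begin


lemma deg2_real:
  fixes f y :: "nat \<Rightarrow> real" and i :: nat
  assumes f01: "\<And>j. j \<in> {1..4} \<Longrightarrow> 0 \<le> f j \<and> f j \<le> 1"
    and y01: "\<And>j. j \<in> {1..4} \<Longrightarrow> 0 \<le> y j \<and> y j \<le> 1/2"
    and fs: "sum f {1..4} = 1" and i: "i \<in> {1..4}"
  defines "P \<equiv> (1-f i)*(1-y i)/(\<Sum>j\<in>{1..4}. (1-f j)*(1-y j))"
  shows "0 \<le> P" "P \<le> 1/2" "f i \<le> 4/7 \<Longrightarrow> 1/13 \<le> P"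
    "1/16 \<le> f i \<Longrightarrow> P \<le> 12/25" "1/13 \<le> y i \<Longrightarrow> P \<le> 12/25"
proof -
  define S where "S = {1..4::nat} - {i}"
  define a where "a = (1-f i)*(1-y i)"
  define R where "R = (\<Sum>j\<in>S. (1-f j)*(1-y j))"
  have fin: "finite S" unfolding S_def by simp
  have cS: "card S = 3" unfolding S_def using i by simp
  have sumsplit: "(\<Sum>j\<in>{1..4}. (1-f j)*(1-y j)) = a + R"
    unfolding a_def R_def S_def using i by (simp add: sum.remove)
  have fS: "sum f S = 1 - f i" using fs i unfolding S_def by (simp add: sum.remove)
  have s1: "(\<Sum>j\<in>S. (1 - f j)) = 2 + f i"
    using fS cS by (simp add: sum_subtractf)
  have Rlo: "2 * R \<ge> 2 + f i"
  proof -
    have "(\<Sum>j\<in>S. (1 - f j)/2) \<le> R" unfolding R_def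
    proof (rule sum_mono)
      fix j assume "j \<in> S"
      then have "j \<in> {1..4}" unfolding S_def by auto
      then have "0 \<le> 1 - f j" "1/2 \<le> 1 - y j" using f01 y01 by auto
      then show "(1 - f j)/2 \<le> (1-f j)*(1-y j)"
        by (metis mult.commute divide_inverse_commute mult_left_mono inverse_eq_divide  times_divide_eq_right mult_1)
    qed
    then have "(\<Sum>j\<in>S. (1 - f j))/2 \<le> R" by (simp add: sum_divide_distrib[symmetric])
    then show ?thesis using s1 by simp
  qed
  have Rhi: "R \<le> 2 + f i"
  proof -
    have "R \<le> (\<Sum>j\<in>S. (1 - f j))" unfolding R_def
    proof (rule sum_mono)
      fix j assume "j \<in> S"
      then have "j \<in> {1..4}" unfolding S_def by auto
      then have "0 \<le> 1 - f j" "1 - y j \<le> 1" using f01 y01 by auto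
      then show "(1-f j)*(1-y j) \<le> (1 - f j)"
        using mult_left_mono[of "1 - y j" 1 "1 - f j"] by simp
    qed
    then show ?thesis using s1 by simp
  qed
  have fi: "0 \<le> 1 - f i" "1 - f i \<le> 1" and yi: "1/2 \<le> 1 - y i" "1 - y i \<le> 1"
    using f01[OF i] y01[OF i] by auto
  have alo: "1 - f i \<le> 2 * a" unfolding a_def
    using mult_left_mono[OF yi(1) fi(1)] by simp
  have ahi: "a \<le> 1 - f i" unfolding a_def
    using mult_left_mono[OF yi(2) fi(1)] by simp
  have a0: "0 \<le> a" using alo fi(1) by linarith
  have Rpos: "R > 0" using Rlo fi by linarith
  have Pe: "P = a / (a + R)" unfolding P_def sumsplit a_def by simp
  have den: "a + R > 0" using a0 Rpos by linarith
  show "0 \<le> P" unfolding Pe using a0 den by simp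
  show "P \<le> 1/2" unfolding Pe using den ahi fi Rlo by (simp add: divide_simps)
  show "f i \<le> 4/7 \<Longrightarrow> 1/13 \<le> P" unfolding Pe using den alo Rhi by (simp add: divide_simps)
  show "1/16 \<le> f i \<Longrightarrow> P \<le> 12/25" unfolding Pe using den ahi Rlo by (simp add: divide_simps)
  assume y13: "1/13 \<le> y i"
  have "a \<le> (1 - f i) * (12/13)" unfolding a_def
    using mult_left_mono[of "1 - y i" "12/13" "1 - f i"] y13 fi by simp
  then show "P \<le> 12/25" unfolding Pe using den Rlo fi by (simp add: divide_simps)
qed



lemma Q_bounds:
  fixes x :: "nat \<Rightarrow> real"
  assumes "\<And>k. k < d \<Longrightarrow> 0 \<le> x k \<and> x k \<le> 1/2"
  shows "(1/2)^d \<le> (\<Prod>k<d. (1 - x k))" "(\<Prod>k<d. (1 - x k)) \<le> 1"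
proof -
  have "(\<Prod>k<d. (1/2::real)) \<le> (\<Prod>k<d. (1 - x k))"
    by (rule prod_mono) (use assms in auto)
  then show "(1/2)^d \<le> (\<Prod>k<d. (1 - x k))" by simp
  show "(\<Prod>k<d. (1 - x k)) \<le> 1"
    by (rule prod_le_1) (use assms in force)
qed

lemma f_gen:
  fixes Q :: "nat \<Rightarrow> real" and A :: "nat set"
  assumes A: "A \<subseteq> {1..4}" "A \<noteq> {}"
    and Qb: "\<And>w. w \<in> A \<Longrightarrow> (1/2)^d \<le> Q w \<and> Q w \<le> 1"
  defines "f \<equiv> (\<lambda>j. if j \<notin> A then 0 else Q j / sum Q A)"
  shows "0 \<le> f j" "f j \<le> 1" "sum f {1..4} = 1"
proof -
  have fin: "finite A" using A finite_subset by blast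
  have Qpos: "\<And>w. w \<in> A \<Longrightarrow> 0 < Q w" using Qb
    by (meson less_le_trans zero_less_divide_1_iff zero_less_numeral zero_less_power)
  have sp: "sum Q A > 0" using fin A(2) Qpos by (simp add: sum_pos)
  show "0 \<le> f j" unfolding f_def using Qpos sp by (auto intro: divide_nonneg_pos less_imp_le)
  show "f j \<le> 1"
  proof (cases "j \<in> A")
    case True
    have "Q j \<le> sum Q A" by (rule member_le_sum[OF True _ fin]) (use Qpos in \<open>auto intro: less_imp_le\<close>)
    then show ?thesis using True sp by (simp add: f_def)
  qed (simp add: f_def)
  have "sum f {1..4} = sum f A"
    by (rule sum.mono_neutral_right) (use A in \<open>auto simp: f_def\<close>)
  also have "\<dots> = sum (\<lambda>j. Q j / sum Q A) A" unfolding f_def by simp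
  also have "\<dots> = 1" using sp by (simp add: sum_divide_distrib[symmetric])
  finally show "sum f {1..4} = 1" .
qed

lemma f_spec:
  fixes Q :: "nat \<Rightarrow> real" and A :: "nat set"
  assumes A: "A \<subseteq> {1..4}" "i \<in> A" "card A \<ge> d + 2" "d \<le> 2"
    and Qb: "\<And>w. w \<in> A \<Longrightarrow> (1/2)^d \<le> Q w \<and> Q w \<le> 1"
  shows "Q i / sum Q A \<le> 4/7" "1/16 \<le> Q i / sum Q A"
proof -
  have fin: "finite A" using A finite_subset by blast
  have Qpos: "\<And>w. w \<in> A \<Longrightarrow> 0 < Q w" using Qb
    by (meson less_le_trans zero_less_divide_1_iff zero_less_numeral zero_less_power)
  define r where "r = sum Q (A - {i})"
  have spl: "sum Q A = Q i + r" unfolding r_def using fin A(2) by (simp add: sum.remove)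
  have "of_nat (card (A - {i})) * (1/2)^d \<le> r"
    unfolding r_def using sum_mono[of "A - {i}" "\<lambda>_. (1/2::real)^d" Q] Qb by simp
  moreover have "card (A - {i}) \<ge> d + 1" using A fin by simp
  ultimately have "real (d+1) * (1/2)^d \<le> r"
    by (smt (verit) of_nat_le_iff mult_right_mono zero_le_power zero_le_divide_1_iff)
  moreover have "real (d+1) * (1/2)^d \<ge> 3/4" using A(4)
    by (cases d; cases "d - 1"; auto)
  ultimately have r34: "r \<ge> 3/4" by linarith
  have Qi: "(1/2)^d \<le> Q i" "Q i \<le> 1" using Qb A(2) by auto
  show "Q i / sum Q A \<le> 4/7" unfolding spl using Qi r34 Qpos[OF A(2)] by (simp add: divide_simps)
  have "(1/2::real)^2 \<le> (1/2)^d" using A(4) by (simp add: power_decreasing)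
  then have Qi4: "1/4 \<le> Q i" using Qi by (simp add: power2_eq_square)
  have "sum Q A \<le> sum (\<lambda>_. 1) A" using sum_mono[of A Q "\<lambda>_. 1"] Qb by auto
  also have "\<dots> = real (card A)" by simp
  also have "\<dots> \<le> 4"
  proof -
    have "card A \<le> card {1..4::nat}" using A(1) by (intro card_mono) auto
    then show ?thesis by simp
  qed
  finally have "sum Q A \<le> 4" .
  then show "1/16 \<le> Q i / sum Q A" unfolding spl using Qi4 r34 by (simp add: divide_simps)
qed


definition okG :: "'a graph \<Rightarrow> ('a \<Rightarrow> nat set) \<Rightarrow> bool" where
  "okG G L \<longleftrightarrow> list_instance G L \<and> (\<forall>u\<in>fst G. deg G u \<le> 3 \<and> card (L u) \<ge> deg G u + 1)"

lemma reachable_okG: "reachable G L v \<longleftrightarrow> okG G L \<and> v \<in> fst G \<and> deg G v \<le> 2 \<and> card (L v) \<ge> deg G v + 2"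
  unfolding reachable_def okG_def by auto

lemma nbrs_sub: "simple_graph G \<Longrightarrow> nbrs G v \<subseteq> fst G - {v}"
  unfolding simple_graph_def nbrs_def
  by (auto simp: doubleton_eq_iff)

lemma nbrs_fin: "simple_graph G \<Longrightarrow> finite (nbrs G v)"
  using nbrs_sub unfolding simple_graph_def by (meson finite_Diff finite_subset)

lemma nbrs_sym: "u \<in> nbrs G v \<longleftrightarrow> v \<in> nbrs G u"
  unfolding nbrs_def by (simp add: insert_commute)

lemma nbrs_del: "u \<noteq> v \<Longrightarrow> nbrs (del G v) u = nbrs G u - {v}"
  unfolding nbrs_def del_def by auto

lemma simple_del: "simple_graph G \<Longrightarrow> simple_graph (del G v)"
  unfolding simple_graph_def del_def by fastforce

lemma deg_del: assumes "simple_graph G" "u \<noteq> v"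
  shows "deg (del G v) u = (if v \<in> nbrs G u then deg G u - 1 else deg G u)"
  unfolding deg_def nbrs_del[OF assms(2)] using nbrs_fin[OF assms(1)] by auto

lemma ok_del:
  assumes ok: "okG G L" and u: "u \<in> nbrs G v"
    and sub: "\<And>w. L' w \<subseteq> L w" and Lu: "L' u = L u"
    and same: "\<And>w. w \<notin> nbrs G v \<Longrightarrow> L' w = L w"
    and cardL: "\<And>w. w \<in> fst G \<Longrightarrow> card (L w) \<le> card (L' w) + 1"
  shows "reachable (del G v) L' u"
proof -
  have sg: "simple_graph G" using ok unfolding okG_def list_instance_def by auto
  have uG: "u \<in> fst G" "u \<noteq> v" using nbrs_sub[OF sg] u by auto
  have sg': "simple_graph (del G v)" using simple_del[OF sg] .
  have li: "list_instance (del G v) L'" using sg' ok sub unfolding list_instance_def okG_def del_def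
    by fastforce
  have ww: "deg (del G v) w \<le> 3 \<and> card (L' w) \<ge> deg (del G v) w + 1" if w: "w \<in> fst (del G v)" for w
  proof -
    have wG: "w \<in> fst G" "w \<noteq> v" using w unfolding del_def by auto
    have okw: "deg G w \<le> 3" "card (L w) \<ge> deg G w + 1" using ok wG unfolding okG_def by auto
    show ?thesis
    proof (cases "w \<in> nbrs G v")
      case True
      then have "v \<in> nbrs G w" using nbrs_sym by metis
      moreover then have "deg G w \<ge> 1" using nbrs_fin[OF sg, of w] unfolding deg_def
        by (metis One_nat_def card_0_eq empty_iff less_one not_le)
      ultimately show ?thesis using deg_del[OF sg wG(2)] okw cardL[OF wG(1)] by auto
    next
      case False
      then have "v \<notin> nbrs G w" using nbrs_sym by metis
      then show ?thesis using deg_del[OF sg wG(2)] okw same[OF False] by auto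
    qed
  qed
  have vu: "v \<in> nbrs G u" using u nbrs_sym by metis
  have degu: "deg G u \<ge> 1" using vu nbrs_fin[OF sg, of u] unfolding deg_def
    by (metis One_nat_def card_0_eq empty_iff less_one not_le)
  have oku: "deg G u \<le> 3" "card (L u) \<ge> deg G u + 1" using ok uG unfolding okG_def by auto
  show ?thesis unfolding reachable_okG okG_def
    using li ww uG deg_del[OF sg uG(2)] vu degu oku Lu by (auto simp: del_def)
qed

lemma nbo_facts:
  assumes "valid_nbo nbo" "simple_graph G"
  shows "distinct (nbo G v)" "set (nbo G v) = nbrs G v" "length (nbo G v) = deg G v"
proof -
  have "finite (nbrs G v)" using nbrs_fin[OF assms(2)] .
  then have h: "distinct (nbo G v) \<and> set (nbo G v) = nbrs G v"
    using assms(1) unfolding valid_nbo_def by blast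
  then show "distinct (nbo G v)" "set (nbo G v) = nbrs G v" by auto
  show "length (nbo G v) = deg G v" unfolding deg_def using h distinct_card by metis
qed

lemma nth_notin_take: "distinct xs \<Longrightarrow> k < length xs \<Longrightarrow> xs ! k \<notin> set (take k xs)"
proof
  assume d: "distinct xs" and k: "k < length xs" and m: "xs ! k \<in> set (take k xs)"
  then obtain j where j: "j < length (take k xs)" "take k xs ! j = xs ! k" by (metis in_set_conv_nth)
  then have "j < k" "xs ! j = xs ! k" using k by auto
  then show False using d k nth_eq_iff_index_eq by fastforce
qed



definition invR :: "('a graph \<Rightarrow> ('a \<Rightarrow> nat set) \<Rightarrow> 'a \<Rightarrow> nat \<Rightarrow> real) \<Rightarrow> bool" where
  "invR R \<longleftrightarrow> (\<forall>G L v i. reachable G L v \<longrightarrow>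
      0 \<le> R G L v i \<and> R G L v i \<le> 1/2 \<and> (i \<in> L v \<longrightarrow> 1/13 \<le> R G L v i))"

lemma invR_D: "invR R \<Longrightarrow> reachable G L v \<Longrightarrow> 0 \<le> R G L v i \<and> R G L v i \<le> 1/2 \<and> (i \<in> L v \<longrightarrow> 1/13 \<le> R G L v i)"
  unfolding invR_def by blast

lemma reach_basic:
  assumes "reachable G L v"
  shows "simple_graph G" "okG G L" "L v \<subseteq> {1..4}" "finite (L v)" "card (L v) \<le> 4"
    "deg G v \<le> 2" "card (L v) \<ge> deg G v + 2" "v \<in> fst G"
proof -
  show "simple_graph G" "okG G L" "deg G v \<le> 2" "card (L v) \<ge> deg G v + 2" "v \<in> fst G"
    using assms unfolding reachable_okG okG_def list_instance_def by auto
  show s: "L v \<subseteq> {1..4}" using assms unfolding reachable_def list_instance_def by auto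
  then show "finite (L v)" using finite_subset by blast
  have "card (L v) \<le> card {1..4::nat}" using s by (intro card_mono) auto
  then show "card (L v) \<le> 4" by simp
qed

lemma step_deg0:
  assumes r: "reachable G L v" and d: "deg G v = 0"
  shows "0 \<le> Pstep nbo R G L v i \<and> Pstep nbo R G L v i \<le> 1/2 \<and> (i \<in> L v \<longrightarrow> 1/13 \<le> Pstep nbo R G L v i)"
proof -
  have c: "2 \<le> card (L v)" "card (L v) \<le> 4" using reach_basic[OF r] d by auto
  have "Pstep nbo R G L v i = (if i \<notin> L v then 0 else 1 / real (card (L v)))"
    unfolding Pstep_def using d by simp
  then show ?thesis using c by (auto simp: divide_simps)
qed

lemma step_deg1:
  assumes nbo: "valid_nbo nbo" and inv: "invR R" and r: "reachable G L v" and d: "deg G v = 1"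
  shows "0 \<le> Pstep nbo R G L v i \<and> Pstep nbo R G L v i \<le> 1/2 \<and> (i \<in> L v \<longrightarrow> 1/13 \<le> Pstep nbo R G L v i)"
    "(\<exists>u\<in>nbrs G v. i \<in> L u) \<Longrightarrow> Pstep nbo R G L v i \<le> 6/13"
proof -
  note rb = reach_basic[OF r]
  have c: "3 \<le> card (L v)" "card (L v) \<le> 4" using rb d by auto
  define v1 where "v1 = hd (nbo G v)"
  have nf: "distinct (nbo G v)" "set (nbo G v) = nbrs G v" "length (nbo G v) = 1"
    using nbo_facts[OF nbo rb(1), of v] d by auto
  then have nb: "nbrs G v = {v1}" unfolding v1_def
    by (metis One_nat_def hd_conv_nth length_0_conv list.set(1) list.set(2) list.size(3) nth_Cons_0 zero_neq_one
        length_Suc_conv list.sel(1))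
  have r1: "reachable (del G v) L v1"
    by (rule ok_del[OF rb(2)]) (use nb in auto)
  define x where "x = R (del G v) L v1 i"
  define y where "y = R (del G v) L v1 (the_elem ({1..4} - L v))"
  have xb: "0 \<le> x" "x \<le> 1/2" "i \<in> L v1 \<Longrightarrow> 1/13 \<le> x" using invR_D[OF inv r1] unfolding x_def by auto
  have yb: "0 \<le> y" "y \<le> 1/2" using invR_D[OF inv r1] unfolding y_def by auto
  have eq: "Pstep nbo R G L v i = (if i \<notin> L v then 0 else if card (L v) = 4 then (1 - x)/3 else (1-x)/(2+y))"
    unfolding Pstep_def Let_def x_def y_def v1_def using d c by auto
  show "0 \<le> Pstep nbo R G L v i \<and> Pstep nbo R G L v i \<le> 1/2 \<and> (i \<in> L v \<longrightarrow> 1/13 \<le> Pstep nbo R G L v i)"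
  proof -
    have A: "0 \<le> (1 - x)/3 \<and> (1 - x)/3 \<le> 1/2 \<and> 1/13 \<le> (1 - x)/3" using xb by (simp add: divide_simps)
    have B: "0 \<le> (1 - x)/(2+y) \<and> (1 - x)/(2+y) \<le> 1/2 \<and> 1/13 \<le> (1 - x)/(2+y)" using xb yb by (simp add: divide_simps)
    show ?thesis unfolding eq using A B by simp
  qed
  assume "\<exists>u\<in>nbrs G v. i \<in> L u"
  then have "i \<in> L v1" using nb by auto
  then have x13: "1/13 \<le> x" using xb by auto
  have A: "(1 - x)/3 \<le> 6/13" using xb by (simp add: divide_simps)
  have B: "(1 - x)/(2+y) \<le> 6/13" using x13 yb by (simp add: divide_simps)
  show "Pstep nbo R G L v i \<le> 6/13"
    unfolding eq using A B by simp
qed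



lemma card_le_diff1: "card (A::'b set) \<le> card (A - {x}) + 1"
proof (cases "finite A")
  case True
  then show ?thesis by (cases "x \<in> A") (auto simp: card_Diff_singleton)
qed simp

lemma step_deg2:
  assumes nbo: "valid_nbo nbo" and inv: "invR R" and r: "reachable G L v" and d: "deg G v = 2"
  shows "0 \<le> Pstep nbo R G L v i \<and> Pstep nbo R G L v i \<le> 1/2 \<and> (i \<in> L v \<longrightarrow> 1/13 \<le> Pstep nbo R G L v i)"
    "(\<exists>u\<in>nbrs G v. i \<in> L u) \<Longrightarrow> Pstep nbo R G L v i \<le> 12/25"
proof -
  note rb = reach_basic[OF r]
  have Lv: "L v = {1..4}"
  proof -
    have "card (L v) = card {1..4::nat}" using rb d by simp
    then show ?thesis using rb(3) by (simp add: card_subset_eq)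
  qed
  define a where "a = nbo G v ! 0"
  define b where "b = nbo G v ! 1"
  have nf: "distinct (nbo G v)" "set (nbo G v) = nbrs G v" "length (nbo G v) = 2"
    using nbo_facts[OF nbo rb(1), of v] d by auto
  then have ab: "nbo G v = [a, b]" unfolding a_def b_def
    using nf(3) by (auto simp: numeral_2_eq_2 length_Suc_conv)
  have nb: "nbrs G v = {a, b}" "a \<noteq> b" using nf ab by auto
  define v1 where "v1 = (if good_pair G L i a b then a else b)"
  define v2 where "v2 = (if good_pair G L i a b then b else a)"
  have v12: "nbrs G v = {v1, v2}" "v1 \<noteq> v2" using nb unfolding v1_def v2_def by auto
  define Gv where "Gv = del G v"
  define Gvv where "Gvv = del Gv v1"
  define us where "us = nbo Gv v1"
  define d1 where "d1 = length us"
  define x where "x = (\<lambda>k w. R Gvv (Lmod L us k w) (us ! k) w)"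
  define Q where "Q = (\<lambda>w. \<Prod>k<d1. (1 - x k w))"
  define f where "f = (\<lambda>j. if j \<notin> L v1 then 0 else Q j / (\<Sum>w\<in>L v1. Q w))"
  define y where "y = (\<lambda>j. R Gv (Lmod L [v1, v2] 1 j) v2 j)"
  have eq: "Pstep nbo R G L v i = (if i \<notin> L v then 0 else
       (1 - f i) * (1 - y i) / (\<Sum>j\<in>L v. (1 - f j) * (1 - y j)))"
    unfolding Pstep_def Let_def f_def y_def Q_def x_def d1_def us_def Gvv_def Gv_def v1_def v2_def
      a_def b_def using d
    apply (simp only: d)
    apply (simp only: if_False if_True rel_simps simp_thms)
    done
  have r1: "reachable Gv L v1" unfolding Gv_def
    by (rule ok_del[OF rb(2)]) (use v12 in auto)
  note rb1 = reach_basic[OF r1]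
  have usf: "distinct us" "set us = nbrs Gv v1" "d1 = deg Gv v1"
    using nbo_facts[OF nbo rb1(1), of v1] unfolding us_def d1_def by auto
  have xb: "0 \<le> x k w \<and> x k w \<le> 1/2" if k: "k < d1" for k w
  proof -
    have uk: "us ! k \<in> nbrs Gv v1" using k usf unfolding d1_def by (metis nth_mem)
    have "reachable Gvv (Lmod L us k w) (us ! k)" unfolding Gvv_def
    proof (rule ok_del[OF rb1(2) uk])
      show "\<And>u. Lmod L us k w u \<subseteq> L u" unfolding Lmod_def by auto
      show "Lmod L us k w (us ! k) = L (us ! k)" unfolding Lmod_def
        using nth_notin_take[OF usf(1)] k unfolding d1_def by auto
      show "Lmod L us k w u = L u" if "u \<notin> nbrs Gv v1" for u
      proof -
        have "u \<notin> set (take k us)" using that usf(2) set_take_subset[of k us] by blast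
        then show ?thesis unfolding Lmod_def by simp
      qed
      show "card (L u) \<le> card (Lmod L us k w u) + 1" for u
        unfolding Lmod_def using card_le_diff1[of "L u" w] by simp
    qed
    from invR_D[OF inv this, of w] show ?thesis unfolding x_def by simp
  qed
  have Qb: "(1/2)^d1 \<le> Q w \<and> Q w \<le> 1" for w
    using Q_bounds[of d1 "\<lambda>k. x k w"] xb unfolding Q_def by auto
  have Lv1: "L v1 \<subseteq> {1..4}" "L v1 \<noteq> {}" "card (L v1) \<ge> d1 + 2" "d1 \<le> 2"
    using rb1 usf by auto
  have fg: "0 \<le> f j" "f j \<le> 1" "sum f {1..4} = 1" for j
    using f_gen[OF Lv1(1,2), where Q=Q and d=d1] Qb unfolding f_def by auto
  have yb: "0 \<le> y j \<and> y j \<le> 1/2 \<and> (j \<in> L v2 \<longrightarrow> 1/13 \<le> y j)" for j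
  proof -
    have Lm: "Lmod L [v1, v2] 1 j = (\<lambda>u. if u = v1 then L u - {j} else L u)"
      unfolding Lmod_def by auto
    have "reachable Gv (Lmod L [v1, v2] 1 j) v2" unfolding Gv_def Lm
      by (rule ok_del[OF rb(2)]) (use v12 card_le_diff1 in auto)
    moreover have "Lmod L [v1, v2] 1 j v2 = L v2" unfolding Lm using v12 by auto
    ultimately show ?thesis using invR_D[OF inv] unfolding y_def by metis
  qed
  note D = deg2_real[of f y i]
  have eq2: "i \<in> L v \<Longrightarrow> Pstep nbo R G L v i = (1 - f i) * (1 - y i) / (\<Sum>j\<in>{1..4}. (1 - f j) * (1 - y j))"
    unfolding eq Lv by simp
  have f47: "f i \<le> 4/7"
  proof (cases "i \<in> L v1")
    case True
    then show ?thesis using f_spec[OF Lv1(1) True Lv1(3,4), where Q=Q] Qb unfolding f_def by auto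
  qed (simp add: f_def)
  show "0 \<le> Pstep nbo R G L v i \<and> Pstep nbo R G L v i \<le> 1/2 \<and> (i \<in> L v \<longrightarrow> 1/13 \<le> Pstep nbo R G L v i)"
  proof (cases "i \<in> L v")
    case True
    then have i4: "i \<in> {1..4}" using Lv by simp
    show ?thesis using D(1,2,3)[OF _ _ _ i4] fg yb eq2[OF True] f47 by auto
  qed (simp add: eq)
  assume "\<exists>u\<in>nbrs G v. i \<in> L u"
  then have iu: "i \<in> L v1 \<or> i \<in> L v2" using v12 by auto
  have "v2 \<in> fst G" using nbrs_sub[OF rb(1), of v] v12 by auto
  then have "L v2 \<subseteq> {1..4}" using rb(2) unfolding okG_def list_instance_def by auto
  then have i4: "i \<in> {1..4}" using iu Lv1(1) by auto
  show "Pstep nbo R G L v i \<le> 12/25"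
  proof (cases "i \<in> L v1")
    case True
    have "1/16 \<le> f i" using f_spec[OF Lv1(1) True Lv1(3,4), where Q=Q] Qb True unfolding f_def by auto
    then show ?thesis using D(4)[OF _ _ _ i4] fg yb eq2 i4 Lv by auto
  next
    case False
    then have "1/13 \<le> y i" using iu yb by auto
    then show ?thesis using D(5)[OF _ _ _ i4] fg yb eq2 i4 Lv by auto
  qed
qed


lemma step_all:
  assumes nbo: "valid_nbo nbo" and inv: "invR R" and r: "reachable G L v"
  shows "0 \<le> Pstep nbo R G L v i \<and> Pstep nbo R G L v i \<le> 1/2 \<and> (i \<in> L v \<longrightarrow> 1/13 \<le> Pstep nbo R G L v i)"
proof -
  have "deg G v = 0 \<or> deg G v = 1 \<or> deg G v = 2" using reach_basic(6)[OF r] by auto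
  then show ?thesis using step_deg0[OF r] step_deg1(1)[OF nbo inv r] step_deg2(1)[OF nbo inv r] by blast
qed

lemma inv_Pproc:
  assumes nbo: "valid_nbo nbo"
  shows "invR (\<lambda>G L v i. Pproc nbo G L v i D)"
proof (induction D)
  case 0
  show ?case unfolding invR_def
  proof (intro allI impI)
    fix G :: "'a graph" and L v i assume r: "reachable G L v"
    have c: "2 \<le> card (L v)" "card (L v) \<le> 4" using reach_basic[OF r] by auto
    then show "0 \<le> Pproc nbo G L v i 0 \<and> Pproc nbo G L v i 0 \<le> 1/2 \<and> (i \<in> L v \<longrightarrow> 1/13 \<le> Pproc nbo G L v i 0)"
      by (auto simp: divide_simps)
  qed
next
  case (Suc D)
  show ?case unfolding invR_def
    using step_all[OF nbo Suc.IH] by simp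
qed

theorem proposition9:
  fixes G :: "'a graph" and L :: "'a \<Rightarrow> nat set" and v :: 'a
    and i D :: nat and nbo :: "'a graph \<Rightarrow> 'a \<Rightarrow> 'a list"
  assumes "valid_nbo nbo"
    and "reachable G L v"
    and "i \<in> {1..4}"
    and "\<exists>u\<in>nbrs G v. i \<in> L u"
  shows "(deg G v = 2 \<longrightarrow> Pproc nbo G L v i D \<le> 12 / 25) \<and>
         (deg G v = 1 \<longrightarrow> Pproc nbo G L v i D \<le> 6 / 13)"
proof (cases D)
  case 0
  have "deg G v + 2 \<le> card (L v)" using reach_basic[OF assms(2)] by auto
  then show ?thesis unfolding 0 by (auto simp: divide_simps)
next
  case (Suc D')
  note inv = inv_Pproc[OF assms(1), of D']
  show ?thesis unfolding Suc Pproc.simps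
    using step_deg1(2)[OF assms(1) inv assms(2) _ assms(4)] step_deg2(2)[OF assms(1) inv assms(2) _ assms(4)]
    by blast
qed


end
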